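(* Let $L\ge 2$, $k\ge 2$ be integers, $\kappa:\{1,\dots,k-1\}\times\mathbb{N}\to\{0,\dots,L-1\}$ a map, and let $(b(n))_{n=0}^\infty$ be the $(L,k,\kappa)$-TM sequence over the letters $a_j=\exp\frac{2\pi\sqrt{-1}\,j}{L}$, $0\le j\le L-1$. Let $G(z)=\sum_{n=0}^\infty b(n)z^n$. Then for $|z|<1$, $$G(z)=\prod_{y=0}^{\infty}\Big(1+\sum_{s=1}^{k-1}\exp\frac{2\pi\sqrt{-1}\,\kappa(s,y)}{L}\,z^{sk^y}\Big).$$
   Context: $\mathbb{N}$ is the set of non-negative integers. Given pairwise distinct complex numbers $a_0,\dots,a_{L-1}$, let $f$ be the map on $\{a_0,\dots,a_{L-1}\}$ with $f(a_i)=a_{i+1}$ (indices modulo $L$), extended letterwise to finite words; $f^j$ is its $j$-fold iterate and $f^0$ the identity. Define finite words $A_0=a_0$ and $A_{n+1}=A_n\,f^{\kappa(1,n)}(A_n)\,f^{\kappa(2,n)}(A_n)\cdots f^{\kappa(k-1,n)}(A_n)$ (concatenation), so $A_n$ has length $k^n$ and is a prefix of $A_{n+1}$. The infinite word $A_\infty=\lim_{n\to\infty}A_n$, viewed as a sequence indexed from $0$, is the $(L,k,\kappa)$-TM sequence. *)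

theory Defs
  imports "HOL-Analysis.Analysis"
begin

text \<open>Words are represented by lists of letter indices i (standing for the letter a_i).
  The map f^j acts letterwise on indices by i |-> (i + j) mod L.\<close>

definition tm_shift :: "nat \<Rightarrow> nat \<Rightarrow> nat list \<Rightarrow> nat list" where
  "tm_shift L j w = map (\<lambda>i. (i + j) mod L) w"

fun tm_word :: "nat \<Rightarrow> nat \<Rightarrow> (nat \<Rightarrow> nat \<Rightarrow> nat) \<Rightarrow> nat \<Rightarrow> nat list" where
  "tm_word L k \<kappa> 0 = [0]"
| "tm_word L k \<kappa> (Suc n) =
     tm_word L k \<kappa> n @ concat (map (\<lambda>s. tm_shift L (\<kappa> s n) (tm_word L k \<kappa> n)) [1..<k])"

text \<open>The (L,k,kappa)-TM sequence over letters a: the m-th letter of the limit word,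
  read off from any A_n that is long enough (the first one).\<close>
definition tm_seq :: "(nat \<Rightarrow> complex) \<Rightarrow> nat \<Rightarrow> nat \<Rightarrow> (nat \<Rightarrow> nat \<Rightarrow> nat) \<Rightarrow> nat \<Rightarrow> complex" where
  "tm_seq a L k \<kappa> m =
     a (tm_word L k \<kappa> (LEAST n. m < length (tm_word L k \<kappa> n)) ! m)"

end

theory Submission
  imports Defs
begin

lemma tm_len: "k \<ge> 1 \<Longrightarrow> length (tm_word L k \<kappa> n) = k ^ n"
proof (induction n)
  case 0 then show ?case by simp
next
  case (Suc n)
  have "length (tm_word L k \<kappa> (Suc n)) = k^n + (k - 1) * k^n"
    using Suc by (simp add: length_concat tm_shift_def o_def sum_list_triv)
  also have "\<dots> = k ^ Suc n" using Suc.prems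
    by (cases k) (auto simp: algebra_simps)
  finally show ?case .
qed

lemma concat_nth_block:
  "\<forall>x\<in>set xs. length x = n \<Longrightarrow> i < length xs \<Longrightarrow> j < n \<Longrightarrow> concat xs ! (i*n+j) = xs!i!j"
proof (induction xs arbitrary: i)
  case Nil then show ?case by simp
next
  case (Cons x xs)
  show ?case
  proof (cases i)
    case 0 then show ?thesis using Cons by (simp add: nth_append)
  next
    case (Suc i')
    have "concat (x#xs) ! (i*n+j) = concat xs ! (i'*n+j)"
      using Cons.prems Suc by (simp add: nth_append)
    also have "\<dots> = xs!i'!j" using Cons Suc by auto
    finally show ?thesis using Suc by simp
  qed
qed

lemma tm_step_nth:
  assumes "k \<ge> 1" "s < k" "j < k ^ N"
  shows "tm_word L k \<kappa> (Suc N) ! (s * k^N + j) =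
    (if s = 0 then tm_word L k \<kappa> N ! j else (tm_word L k \<kappa> N ! j + \<kappa> s N) mod L)"
proof (cases "s = 0")
  case True then show ?thesis using assms by (simp add: nth_append tm_len)
next
  case False
  let ?W = "tm_word L k \<kappa> N"
  have eq: "s * k^N + j = k^N + ((s-1)*k^N + j)" using False
    by (cases s) auto
  have "tm_word L k \<kappa> (Suc N) ! (s * k^N + j) =
     concat (map (\<lambda>s. tm_shift L (\<kappa> s N) ?W) [1..<k]) ! ((s-1)*k^N + j)"
    unfolding eq using assms by (simp add: nth_append tm_len)
  also have "\<dots> = (map (\<lambda>s. tm_shift L (\<kappa> s N) ?W) [1..<k]) ! (s-1) ! j"
    by (rule concat_nth_block) (use assms False in \<open>auto simp: tm_shift_def tm_len\<close>)
  also have "\<dots> = (?W ! j + \<kappa> s N) mod L"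
    using assms False by (simp add: tm_shift_def tm_len)
  finally show ?thesis using False by simp
qed

lemma tm_prefix:
  assumes "k \<ge> 1" "n \<le> N" "m < k ^ n"
  shows "tm_word L k \<kappa> N ! m = tm_word L k \<kappa> n ! m"
  using assms(2)
proof (induction N rule: dec_induct)
  case base then show ?case by simp
next
  case (step N)
  have "k^n \<le> k^N" using assms step by (simp add: power_increasing)
  then have "m < length (tm_word L k \<kappa> N)" using assms by (simp add: tm_len)
  then show ?case using step by (simp add: nth_append)
qed

lemma sum_shift_block: "(\<Sum>m\<in>{c..<c+K}. g m) = (\<Sum>j<K. g (c + j :: nat))"
  by (induction K) auto


definition om :: "nat \<Rightarrow> nat \<Rightarrow> complex" where
  "om L j = exp (2 * complex_of_real pi * \<i> * of_nat j / of_nat L)"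

lemma om_add: "om L (i + c) = om L i * om L c"
  by (simp add: om_def add_divide_distrib distrib_left exp_add)

lemma om_mod: assumes "L > 0" shows "om L (j mod L) = om L j"
proof -
  have "om L j = om L (j mod L + L * (j div L))" by simp
  also have "\<dots> = om L (j mod L) * om L (L * (j div L))" by (rule om_add)
  also have "om L (L * (j div L)) = exp (of_nat (j div L) * (2 * complex_of_real pi * \<i>))"
    using assms by (simp add: om_def mult_ac)
  also have "\<dots> = 1" by (simp add: exp_of_nat_mult)
  finally show ?thesis by simp
qed

lemma norm_om: "norm (om L j) = 1"
proof -
  have "om L j = exp (\<i> * complex_of_real (2 * pi * j / L))"
    by (simp add: om_def mult_ac)
  then show ?thesis by (simp only: norm_exp_i_times)
qed

lemma partial_eq:
  assumes "k \<ge> 1" "L > 0"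
  shows "(\<Sum>m<k^N. om L (tm_word L k \<kappa> N ! m) * z^m) =
    (\<Prod>y<N. 1 + (\<Sum>s=1..k-1. om L (\<kappa> s y) * z^(s*k^y)))"
proof (induction N)
  case 0 then show ?case by (simp add: om_def)
next
  case (Suc N)
  define K where "K = k^N"
  define P where "P = (\<Sum>j<K. om L (tm_word L k \<kappa> N ! j) * z^j)"
  define g where "g m = om L (tm_word L k \<kappa> (Suc N) ! m) * z^m" for m
  have g: "g (s*K+j) = (if s = 0 then om L (tm_word L k \<kappa> N ! j) * z^j
       else om L (\<kappa> s N) * z^(s*K) * (om L (tm_word L k \<kappa> N ! j) * z^j))"
    if "s < k" "j < K" for s j
    using tm_step_nth[OF assms(1) that[unfolded K_def], of L \<kappa>] assms(2)
    by (simp add: g_def K_def om_mod om_add power_add mult_ac)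
  have "(\<Sum>m<k^Suc N. g m) = (\<Sum>m<k*K. g m)" by (simp add: K_def)
  also have "\<dots> = (\<Sum>s<k. \<Sum>m\<in>{s*K..<s*K+K}. g m)"
    by (rule sum.nat_group[symmetric])
  also have "\<dots> = (\<Sum>s<k. \<Sum>j<K. g (s*K+j))"
    by (simp add: sum_shift_block)
  also have "\<dots> = (\<Sum>s<k. if s = 0 then P else om L (\<kappa> s N) * z^(s*K) * P)"
    by (rule sum.cong) (auto simp: g P_def sum_distrib_left)
  also have "{..<k} = insert 0 {1..k-1}" using assms by auto
  also have "(\<Sum>s\<in>insert 0 {1..k-1}. if s = 0 then P else om L (\<kappa> s N) * z^(s*K) * P)
     = P * (1 + (\<Sum>s=1..k-1. om L (\<kappa> s N) * z^(s*K)))"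
    by (simp add: sum_distrib_left sum_distrib_right algebra_simps)
  finally show ?case using Suc by (simp add: g_def P_def K_def)
qed


theorem lemma2p3:
  fixes L k :: nat and \<kappa> :: "nat \<Rightarrow> nat \<Rightarrow> nat" and z :: complex
  assumes "L \<ge> 2" and "k \<ge> 2"
    and "\<And>s y. 1 \<le> s \<Longrightarrow> s \<le> k - 1 \<Longrightarrow> \<kappa> s y < L"
    and "norm z < 1"
  defines "b \<equiv> tm_seq (\<lambda>j. exp (2 * complex_of_real pi * \<i> * of_nat j / of_nat L)) L k \<kappa>"
  shows "summable (\<lambda>n. b n * z ^ n)
    \<and> (\<lambda>y. 1 + (\<Sum>s=1..k-1. exp (2 * complex_of_real pi * \<i> * of_nat (\<kappa> s y) / of_nat L)
                              * z ^ (s * k ^ y)))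
        has_prod (\<Sum>n. b n * z ^ n)"
proof -
  have k1: "k \<ge> 1" and L0: "L > 0" using assms by auto
  have aeq: "(\<lambda>j. exp (2 * complex_of_real pi * \<i> * of_nat j / of_nat L)) = om L"
    by (simp add: fun_eq_iff om_def)
  define f where "f y = 1 + (\<Sum>s=1..k-1. om L (\<kappa> s y) * z^(s*k^y))" for y
  have feq: "(\<lambda>y. 1 + (\<Sum>s=1..k-1. exp (2 * complex_of_real pi * \<i> * of_nat (\<kappa> s y) / of_nat L)
                              * z ^ (s * k ^ y))) = f"
    by (simp add: fun_eq_iff f_def om_def)
  have bN: "b m = om L (tm_word L k \<kappa> N ! m)" if "m < k^N" for m N
  proof -
    define n0 where "n0 = (LEAST n. m < length (tm_word L k \<kappa> n))"
    have ex: "m < length (tm_word L k \<kappa> N)" using that k1 by (simp add: tm_len)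
    have "m < length (tm_word L k \<kappa> n0)" unfolding n0_def by (rule LeastI[where P="\<lambda>n. m < length (tm_word L k \<kappa> n)", OF ex])
    moreover have "n0 \<le> N" unfolding n0_def by (rule Least_le[where P="\<lambda>n. m < length (tm_word L k \<kappa> n)", OF ex])
    ultimately have "tm_word L k \<kappa> N ! m = tm_word L k \<kappa> n0 ! m"
      using tm_prefix[OF k1] k1 by (simp add: tm_len)
    then show ?thesis by (simp add: b_def aeq tm_seq_def n0_def)
  qed
  have nb: "norm (b m) = 1" for m
  proof -
    have "m < k^m" using assms(2)
      by (metis less_exp le_less_trans power_increasing_iff power_mono zero_le
           order_less_le_trans less_le_trans power_strict_increasing_iff order.refl
           Suc_1 Suc_le_eq)
    then show ?thesis using bN norm_om by metis
  qed
  have summ: "summable (\<lambda>n. b n * z ^ n)"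
  proof (rule summable_comparison_test)
    show "\<exists>N. \<forall>n\<ge>N. norm (b n * z ^ n) \<le> norm z ^ n"
      by (auto simp: norm_mult norm_power nb)
    show "summable (\<lambda>n. norm z ^ n)" using assms(4) by simp
  qed
  have fb: "norm (f y - 1) \<le> of_nat (k-1) * norm z ^ y" for y
  proof -
    have "norm (f y - 1) \<le> (\<Sum>s=1..k-1. norm (om L (\<kappa> s y) * z^(s*k^y)))"
      unfolding f_def by (simp add: norm_sum)
    also have "\<dots> \<le> (\<Sum>s=1..k-1. norm z ^ y)"
    proof (rule sum_mono)
      fix s assume s: "s \<in> {1..k-1}"
      have "y < 2^y" by (rule less_exp)
      also have "\<dots> \<le> k^y" using assms(2) by (simp add: power_mono)
      also have "\<dots> \<le> s*k^y" using s by simp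
      finally have "y \<le> s*k^y" by simp
      then have "norm z ^ (s*k^y) \<le> norm z ^ y"
        using assms(4) by (intro power_decreasing) auto
      then show "norm (om L (\<kappa> s y) * z^(s*k^y)) \<le> norm z ^ y"
        by (simp add: norm_mult norm_power norm_om)
    qed
    finally show ?thesis by simp
  qed
  have "summable (\<lambda>y. norm (f y - 1))"
  proof (rule summable_comparison_test)
    show "\<exists>N. \<forall>n\<ge>N. norm (norm (f n - 1)) \<le> of_nat (k-1) * norm z ^ n"
      using fb by auto
    show "summable (\<lambda>n. of_nat (k-1) * norm z ^ n)"
      using assms(4) by (intro summable_mult) simp
  qed
  then have cp: "convergent_prod f"
    by (intro abs_convergent_prod_imp_convergent_prod summable_imp_abs_convergent_prod)
  have lim1: "(\<lambda>N. \<Prod>y<Suc N. f y) \<longlonglongrightarrow> prodinf f"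
    using convergent_prod_LIMSEQ[OF cp] by (simp add: lessThan_Suc_atMost)
  have lim2: "(\<lambda>N. \<Sum>m<k^Suc N. b m * z^m) \<longlonglongrightarrow> (\<Sum>n. b n * z ^ n)"
  proof -
    have sm: "strict_mono (\<lambda>N. k ^ Suc N)"
      using assms(2) by (intro strict_monoI power_strict_increasing) auto
    have "(\<lambda>n. \<Sum>m<n. b m * z^m) \<longlonglongrightarrow> (\<Sum>n. b n * z ^ n)"
      using summ by (rule summable_LIMSEQ)
    from LIMSEQ_subseq_LIMSEQ[OF this sm] show ?thesis by (simp add: o_def)
  qed
  have "(\<Sum>m<k^Suc N. b m * z^m) = (\<Prod>y<Suc N. f y)" for N
  proof -
    have "(\<Sum>m<k^Suc N. b m * z^m) = (\<Sum>m<k^Suc N. om L (tm_word L k \<kappa> (Suc N) ! m) * z^m)"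
      by (rule sum.cong[OF refl]) (simp only: bN lessThan_iff)
    then show ?thesis using partial_eq[OF k1 L0, where N="Suc N" and \<kappa>=\<kappa> and z=z] by (simp add: f_def)
  qed
  with lim1 lim2 have "prodinf f = (\<Sum>n. b n * z ^ n)"
    by (metis (no_types, lifting) LIMSEQ_unique ext)
  with cp have "f has_prod (\<Sum>n. b n * z ^ n)" by (simp add: has_prod_iff)
  with summ feq show ?thesis by simp
qed

end
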